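(* Let $m\ge 2$ and let $n_1,\dots,n_m\ge 5$ be odd. Then the strong metric dimension of the odd chain cycle satisfies $$sdim(\mathcal{C}(C_{n_1},\dots,C_{n_m}))=m-1+\left\lfloor\frac{n_1}{2}\right\rfloor+\left\lfloor\frac{n_m}{2}\right\rfloor+\sum_{i=2}^{m-1}\left\lfloor\frac{n_i-2}{2}\right\rfloor.$$
   Context: Let $C_{n_1},\dots,C_{n_m}$ be pairwise disjoint cycles, $V(C_{n_i})=\{v^i_1,\dots,v^i_{n_i}\}$ with $v^i_j$ adjacent to $v^i_{j+1}$ (indices mod $n_i$). The odd chain cycle (all $n_i$ odd) is obtained by identifying $v^i_{(n_i+1)/2+1}$ with $v^{i+1}_1$ for $i=1,\dots,m-1$. A vertex $w$ strongly resolves distinct vertices $u,v$ if $u$ lies on some shortest $v$–$w$ path or $v$ lies on some shortest $u$–$w$ path. A set $W\subseteq V(G)$ is a strong resolving set if every pair of distinct vertices is strongly resolved by some $w\in W$; $sdim(G)$ is the minimum size of a strong resolving set. *)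

theory Defs
  imports Main
begin

definition is_walk :: "('a \<Rightarrow> 'a \<Rightarrow> bool) \<Rightarrow> 'a list \<Rightarrow> bool" where
  "is_walk E xs \<longleftrightarrow> xs \<noteq> [] \<and> (\<forall>k. Suc k < length xs \<longrightarrow> E (xs ! k) (xs ! Suc k))"

definition walk_of_len :: "'a set \<Rightarrow> ('a \<Rightarrow> 'a \<Rightarrow> bool) \<Rightarrow> 'a \<Rightarrow> 'a \<Rightarrow> nat \<Rightarrow> 'a list \<Rightarrow> bool" where
  "walk_of_len V E u v k xs \<longleftrightarrow> is_walk E xs \<and> set xs \<subseteq> V \<and> hd xs = u \<and> last xs = v \<and> length xs = Suc k"

definition gdist :: "'a set \<Rightarrow> ('a \<Rightarrow> 'a \<Rightarrow> bool) \<Rightarrow> 'a \<Rightarrow> 'a \<Rightarrow> nat" where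
  "gdist V E u v = (LEAST k. \<exists>xs. walk_of_len V E u v k xs)"

definition shortest_path :: "'a set \<Rightarrow> ('a \<Rightarrow> 'a \<Rightarrow> bool) \<Rightarrow> 'a \<Rightarrow> 'a \<Rightarrow> 'a list \<Rightarrow> bool" where
  "shortest_path V E u v xs \<longleftrightarrow> walk_of_len V E u v (gdist V E u v) xs"

definition strongly_resolves :: "'a set \<Rightarrow> ('a \<Rightarrow> 'a \<Rightarrow> bool) \<Rightarrow> 'a \<Rightarrow> 'a \<Rightarrow> 'a \<Rightarrow> bool" where
  "strongly_resolves V E w u v \<longleftrightarrow>
     (\<exists>xs. shortest_path V E v w xs \<and> u \<in> set xs) \<or> (\<exists>xs. shortest_path V E u w xs \<and> v \<in> set xs)"

definition strong_resolving_set :: "'a set \<Rightarrow> ('a \<Rightarrow> 'a \<Rightarrow> bool) \<Rightarrow> 'a set \<Rightarrow> bool" where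
  "strong_resolving_set V E W \<longleftrightarrow> W \<subseteq> V \<and>
     (\<forall>u\<in>V. \<forall>v\<in>V. u \<noteq> v \<longrightarrow> (\<exists>w\<in>W. strongly_resolves V E w u v))"

definition sdim :: "'a set \<Rightarrow> ('a \<Rightarrow> 'a \<Rightarrow> bool) \<Rightarrow> nat" where
  "sdim V E = (LEAST k. \<exists>W. finite W \<and> strong_resolving_set V E W \<and> card W = k)"

(* Vertex v^i_j is represented by (i,j), 1 \<le> i \<le> m, 1 \<le> j \<le> n i.
   The identification v^{i}_{(n_i+1)/2+1} = v^{i+1}_1 is realised by mapping (i+1,1)
   to the canonical representative (i, (n_i+1)/2+1). *)
definition canon :: "(nat \<Rightarrow> nat) \<Rightarrow> nat \<times> nat \<Rightarrow> nat \<times> nat" where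
  "canon n p = (case p of (i, j) \<Rightarrow>
      if j = 1 \<and> i \<ge> 2 then (i - 1, (n (i - 1) + 1) div 2 + 1) else (i, j))"

definition chain_V :: "nat \<Rightarrow> (nat \<Rightarrow> nat) \<Rightarrow> (nat \<times> nat) set" where
  "chain_V m n = canon n ` {(i, j). 1 \<le> i \<and> i \<le> m \<and> 1 \<le> j \<and> j \<le> n i}"

definition chain_E :: "nat \<Rightarrow> (nat \<Rightarrow> nat) \<Rightarrow> nat \<times> nat \<Rightarrow> nat \<times> nat \<Rightarrow> bool" where
  "chain_E m n u v \<longleftrightarrow> (\<exists>i\<in>{1..m}. \<exists>j\<in>{1..n i}.
      (u = canon n (i, j) \<and> v = canon n (i, j mod n i + 1)) \<or>
      (v = canon n (i, j) \<and> u = canon n (i, j mod n i + 1)))"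

end

theory Submission
  imports Defs
begin


definition ad :: "nat \<Rightarrow> nat \<Rightarrow> nat" where
  "ad x y = (if x \<le> y then y - x else x - y)"
definition cd :: "nat \<Rightarrow> nat \<Rightarrow> nat \<Rightarrow> nat" where
  "cd N x y = min (ad x y) (N - ad x y)"
definition sc :: "nat \<Rightarrow> nat \<Rightarrow> nat" where
  "sc N j = (if j = N then 1 else j + 1)"
definition pc :: "nat \<Rightarrow> nat \<Rightarrow> nat" where
  "pc N j = (if j = 1 then N else j - 1)"

lemma f1: "(a::nat) + b \<le> N \<Longrightarrow> min (a+b) (N-(a+b)) \<le> min a (N-a) + min b (N-b)"
  unfolding min_def by (simp only: split: if_split; linarith)
lemma f2: "(a::nat) + c \<le> N \<Longrightarrow> min c (N-c) \<le> min a (N-a) + min (a+c) (N-(a+c))"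
  unfolding min_def by (simp only: split: if_split; linarith)

lemma cd_le_sub: "x \<le> y \<Longrightarrow> cd N x y = min (y-x) (N-(y-x))"
  by (simp add: cd_def ad_def)
lemma cd_ge_sub: "y \<le> x \<Longrightarrow> cd N x y = min (x-y) (N-(x-y))"
  by (auto simp add: cd_def ad_def)

lemma cd_self[simp]: "cd N x x = 0" by (simp add: cd_def ad_def)
lemma cd_sym: "cd N x y = cd N y x" by (simp add: cd_def ad_def)

lemma cd_tri0: assumes "x \<le> z" "z \<le> N" "y \<le> N" shows "cd N x z \<le> cd N x y + cd N y z"
proof -
  consider "y \<le> x" | "x \<le> y" "y \<le> z" | "z \<le> y" using assms by linarith
  then show ?thesis
  proof cases
    case 1
    then show ?thesis using f2[of "x-y" "z-x" N] assms
      by (simp add: cd_le_sub cd_ge_sub)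
  next
    case 2
    then show ?thesis using f1[of "y-x" "z-y" N] assms
      by (simp add: cd_le_sub cd_ge_sub)
  next
    case 3
    then show ?thesis using f2[of "y-z" "z-x" N] assms
      by (simp add: cd_le_sub cd_ge_sub add.commute)
  qed
qed

lemma cd_tri: "x \<le> N \<Longrightarrow> y \<le> N \<Longrightarrow> z \<le> N \<Longrightarrow> cd N x z \<le> cd N x y + cd N y z"
  by (metis cd_tri0 cd_sym add.commute nat_le_linear)

lemma cd_le: "cd N x y \<le> N div 2"
proof -
  have "min a (N - a) \<le> N div 2" for a :: nat
    using div_mult_mod_eq[of N 2] mod_less[of "N mod 2" 2] by (simp add: min_def; linarith)
  then show ?thesis by (simp add: cd_def)
qed
lemma cd_zero: "1 \<le> x \<Longrightarrow> x \<le> N \<Longrightarrow> 1 \<le> y \<Longrightarrow> y \<le> N \<Longrightarrow> cd N x y = 0 \<Longrightarrow> x = y"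
  by (cases "x \<le> y") (auto simp: cd_le_sub cd_ge_sub min_def split: if_splits)
lemma sc_range: "1 \<le> j \<Longrightarrow> j \<le> N \<Longrightarrow> 1 \<le> sc N j \<and> sc N j \<le> N"
  by (auto simp: sc_def)
lemma pc_range: "1 \<le> j \<Longrightarrow> j \<le> N \<Longrightarrow> 1 \<le> pc N j \<and> pc N j \<le> N"
  by (auto simp: pc_def)
lemma sc_pc: "1 \<le> j \<Longrightarrow> j \<le> N \<Longrightarrow> sc N (pc N j) = j"
  by (auto simp: sc_def pc_def)
lemma sc_mod: "1 \<le> j \<Longrightarrow> j \<le> N \<Longrightarrow> j mod N + 1 = sc N j"
  by (auto simp: sc_def)
lemma cd_sc: "3 \<le> N \<Longrightarrow> 1 \<le> j \<Longrightarrow> j \<le> N \<Longrightarrow> cd N j (sc N j) = 1"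
  by (cases "j = N") (auto simp: sc_def cd_le_sub cd_ge_sub min_def)
lemma cd_pc: "3 \<le> N \<Longrightarrow> 1 \<le> j \<Longrightarrow> j \<le> N \<Longrightarrow> cd N j (pc N j) = 1"
  by (cases "j = 1") (auto simp: pc_def cd_le_sub cd_ge_sub min_def)

lemma cd_dec: assumes "1 \<le> x" "x \<le> N" "1 \<le> y" "y \<le> N" "x \<noteq> y"
  shows "cd N x (sc N y) + 1 = cd N x y \<or> cd N x (pc N y) + 1 = cd N x y"
proof (cases "x < y")
  case True
  show ?thesis
  proof (cases "y - x \<le> N - (y - x)")
    case c: True
    have "pc N y = y - 1" using True assms by (simp add: pc_def)
    then have "cd N x (pc N y) = y - 1 - x" using True c assms by (simp add: cd_le_sub min_def)
    moreover have "cd N x y = y - x" using True c by (simp add: cd_le_sub min_def)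
    ultimately show ?thesis using True by arith
  next
    case c: False
    have "cd N x y = N - (y - x)" using True c by (simp add: cd_le_sub min_def)
    moreover have "cd N x (sc N y) = N - (y - x) - 1"
    proof (cases "y = N")
      case True
      then show ?thesis using assms c by (simp add: sc_def cd_ge_sub min_def)
    next
      case False
      then show ?thesis using assms True c by (simp add: sc_def cd_le_sub min_def)
    qed
    ultimately show ?thesis using c True assms by arith
  qed
next
  case False
  then have F: "y < x" using assms by simp
  show ?thesis
  proof (cases "x - y \<le> N - (x - y)")
    case c: True
    have "sc N y = y + 1" using F assms by (simp add: sc_def)
    then have "cd N x (sc N y) = x - y - 1" using F c assms by (simp add: cd_ge_sub min_def)
    moreover have "cd N x y = x - y" using F c by (simp add: cd_ge_sub min_def)
    ultimately show ?thesis using F by arith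
  next
    case c: False
    have "cd N x y = N - (x - y)" using F c by (simp add: cd_ge_sub min_def)
    moreover have "cd N x (pc N y) = N - (x - y) - 1"
    proof (cases "y = 1")
      case True
      then show ?thesis using assms c by (simp add: pc_def cd_le_sub min_def)
    next
      case False
      then show ?thesis using assms F c by (simp add: pc_def cd_ge_sub min_def)
    qed
    ultimately show ?thesis using c F assms by arith
  qed
qed



lemma is_walk_single[simp]: "is_walk E [x]"
  by (simp add: is_walk_def)

lemma is_walk_Cons2: "is_walk E (x # y # xs) \<longleftrightarrow> E x y \<and> is_walk E (y # xs)"
proof
  assume a: "is_walk E (x # y # xs)"
  have "E x y" using a unfolding is_walk_def by (metis One_nat_def length_Cons nth_Cons_0 nth_Cons_Suc zero_less_Suc Suc_less_eq)
  moreover have "is_walk E (y # xs)" unfolding is_walk_def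
  proof (intro conjI allI impI)
    fix k assume "Suc k < length (y # xs)"
    then have "Suc (Suc k) < length (x # y # xs)" by simp
    then have "E ((x # y # xs) ! Suc k) ((x # y # xs) ! Suc (Suc k))" using a unfolding is_walk_def by blast
    then show "E ((y # xs) ! k) ((y # xs) ! Suc k)" by simp
  qed simp
  ultimately show "E x y \<and> is_walk E (y # xs)" by simp
next
  assume a: "E x y \<and> is_walk E (y # xs)"
  show "is_walk E (x # y # xs)" unfolding is_walk_def
  proof (intro conjI allI impI)
    fix k assume k: "Suc k < length (x # y # xs)"
    show "E ((x # y # xs) ! k) ((x # y # xs) ! Suc k)"
    proof (cases k)
      case 0 then show ?thesis using a by simp
    next
      case (Suc k')
      then have "Suc k' < length (y # xs)" using k by simp
      then have "E ((y # xs) ! k') ((y # xs) ! Suc k')" using a unfolding is_walk_def by blast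
      then show ?thesis using Suc by simp
    qed
  qed simp
qed

lemma is_walk_tl: "is_walk E (x # xs) \<Longrightarrow> xs \<noteq> [] \<Longrightarrow> is_walk E xs"
  by (cases xs) (auto simp: is_walk_Cons2)

lemma is_walk_append: "is_walk E ys \<Longrightarrow> is_walk E zs \<Longrightarrow> last ys = hd zs \<Longrightarrow> is_walk E (ys @ tl zs)"
proof (induction ys rule: induct_list012)
  case 1 then show ?case by (simp add: is_walk_def)
next
  case (2 x)
  then show ?case by (cases zs) auto
next
  case (3 x y ys)
  then show ?case by (simp add: is_walk_Cons2)
qed

lemma is_walk_drop: "is_walk E xs \<Longrightarrow> i < length xs \<Longrightarrow> is_walk E (drop i xs)"
  unfolding is_walk_def by auto

locale dgraph =
  fixes V :: "'a set" and E :: "'a \<Rightarrow> 'a \<Rightarrow> bool" and D :: "'a \<Rightarrow> 'a \<Rightarrow> nat"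
  assumes finV: "finite V"
    and Esym: "E u v \<Longrightarrow> E v u"
    and EV: "E u v \<Longrightarrow> u \<in> V \<and> v \<in> V"
    and D_self: "D p p = 0"
    and D_sym: "p \<in> V \<Longrightarrow> q \<in> V \<Longrightarrow> D p q = D q p"
    and D_tri: "p \<in> V \<Longrightarrow> q \<in> V \<Longrightarrow> r \<in> V \<Longrightarrow> D p r \<le> D p q + D q r"
    and D_step: "p \<in> V \<Longrightarrow> E q r \<Longrightarrow> D p r \<le> D p q + 1"
    and D_desc: "p \<in> V \<Longrightarrow> q \<in> V \<Longrightarrow> p \<noteq> q \<Longrightarrow> \<exists>r. E q r \<and> D p r + 1 = D p q"
begin

lemma D_pos: "p \<in> V \<Longrightarrow> q \<in> V \<Longrightarrow> p \<noteq> q \<Longrightarrow> D p q > 0"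
  using D_desc by fastforce

lemma walk_exists: "p \<in> V \<Longrightarrow> q \<in> V \<Longrightarrow> \<exists>xs. walk_of_len V E p q (D p q) xs"
proof (induction "D p q" arbitrary: q)
  case 0
  then have "p = q" using D_pos by fastforce
  then show ?case using 0 by (rule_tac x="[p]" in exI) (simp add: walk_of_len_def D_self)
next
  case (Suc d)
  then have "p \<noteq> q" using D_self by force
  then obtain r where r: "E q r" "D p r + 1 = D p q" using D_desc Suc.prems by blast
  have rV: "r \<in> V" using EV r(1) by blast
  have "D p r = d" using r Suc.hyps by simp
  then obtain xs where xs: "walk_of_len V E p r d xs" using Suc.hyps(1)[of r] rV Suc.prems by auto
  have w: "is_walk E [r, q]" using Esym[OF r(1)] by (simp add: is_walk_Cons2)
  have "walk_of_len V E p q (D p q) (xs @ tl [r, q])"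
    using xs is_walk_append[OF _ w] Suc.prems Suc.hyps(2)
    unfolding walk_of_len_def by (auto simp: is_walk_def)
  then show ?case by blast
qed

lemma walk_lower: "is_walk E xs \<Longrightarrow> set xs \<subseteq> V \<Longrightarrow> D (hd xs) (last xs) \<le> length xs - 1"
proof (induction xs rule: induct_list012)
  case 1 then show ?case by (simp add: is_walk_def)
next
  case (2 x) then show ?case by (simp add: D_self)
next
  case (3 x y ys)
  then have e: "E x y" and w: "is_walk E (y # ys)" by (auto simp: is_walk_Cons2)
  have IH: "D y (last (y # ys)) \<le> length ys" using 3 w by simp
  have "D x y \<le> 1" using D_step[of x x y] e 3(4) by (simp add: D_self)
  moreover have "D x (last (y # ys)) \<le> D x y + D y (last (y # ys))"
    using D_tri 3(4) by (metis insert_subset last_in_set list.distinct(1) list.simps(15) subset_iff)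
  ultimately show ?case using IH by simp
qed

lemma gdist_eq: "p \<in> V \<Longrightarrow> q \<in> V \<Longrightarrow> gdist V E p q = D p q"
  unfolding gdist_def
proof (rule Least_equality)
  assume "p \<in> V" "q \<in> V"
  then show "\<exists>xs. walk_of_len V E p q (D p q) xs" by (rule walk_exists)
next
  fix k assume "\<exists>xs. walk_of_len V E p q k xs"
  then obtain xs where xs: "walk_of_len V E p q k xs" by blast
  then show "D p q \<le> k" using walk_lower[of xs] unfolding walk_of_len_def by auto
qed

lemma sp_pos: assumes "v \<in> V" "w \<in> V" "shortest_path V E v w xs" "i < length xs"
  shows "D v (xs ! i) = i"
proof -
  have xs: "is_walk E xs" "set xs \<subseteq> V" "hd xs = v" "last xs = w" "length xs = Suc (D v w)"
    using assms gdist_eq unfolding shortest_path_def walk_of_len_def by auto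
  have ne: "xs \<noteq> []" using xs by (auto simp: is_walk_def)
  have xV: "xs ! i \<in> V" using xs(2) assms(4) by auto
  have "is_walk E (take (Suc i) xs)" using xs(1) assms(4) unfolding is_walk_def by auto
  moreover have "set (take (Suc i) xs) \<subseteq> V" using xs(2) by (meson set_take_subset subset_trans)
  ultimately have a: "D v (xs ! i) \<le> i"
  proof -
    have l: "length (take (Suc i) xs) = Suc i" using assms(4) by simp
    have L: "last (take (Suc i) xs) = xs ! i" using assms(4) l
      by (metis diff_Suc_1 lessI nth_take last_conv_nth list.size(3) nat.distinct(1))
    have H: "hd (take (Suc i) xs) = v" using xs(3) ne by (simp add: hd_take)
    show ?thesis using walk_lower[of "take (Suc i) xs"] l L H by (metis diff_Suc_1 \<open>is_walk E (take (Suc i) xs)\<close> \<open>set (take (Suc i) xs) \<subseteq> V\<close>)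
  qed
  have "is_walk E (drop i xs)" using is_walk_drop xs(1) assms(4) by blast
  moreover have "set (drop i xs) \<subseteq> V" using xs(2) by (meson set_drop_subset subset_trans)
  ultimately have b: "D (xs ! i) w \<le> length xs - 1 - i"
    using walk_lower[of "drop i xs"] xs(4) assms(4) by (simp add: hd_drop_conv_nth)
  have "D v w \<le> D v (xs ! i) + D (xs ! i) w" using D_tri assms xV by blast
  then show ?thesis using a b xs(5) assms(4) by linarith
qed

definition MD :: "'a \<Rightarrow> 'a \<Rightarrow> bool" where
  "MD u v \<longleftrightarrow> (\<forall>z. E u z \<longrightarrow> D v z \<le> D v u)"

lemma MD_end: assumes "u \<in> V" "v \<in> V" "w \<in> V" "MD u v" "shortest_path V E v w xs" "u \<in> set xs"
  shows "w = u"
proof (rule ccontr)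
  assume ne: "w \<noteq> u"
  obtain i where i: "i < length xs" "xs ! i = u" using assms(6) by (meson in_set_conv_nth)
  have xs: "is_walk E xs" "set xs \<subseteq> V" "last xs = w" "length xs = Suc (D v w)"
    using assms gdist_eq unfolding shortest_path_def walk_of_len_def by auto
  have "i \<noteq> length xs - 1" using ne i xs(3) by (metis last_conv_nth list.size(3) not_less0)
  then have si: "Suc i < length xs" using i by linarith
  then have e: "E u (xs ! Suc i)" using xs(1) i unfolding is_walk_def by blast
  have "D v (xs ! Suc i) = Suc i" using sp_pos[OF assms(2,3,5) si] .
  moreover have "D v u = i" using sp_pos[OF assms(2,3,5) i(1)] i by simp
  ultimately show False using assms(4) e unfolding MD_def by force
qed

lemma srs_MMD: assumes "strong_resolving_set V E W" "u \<in> V" "v \<in> V" "u \<noteq> v" "MD u v" "MD v u"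
  shows "u \<in> W \<or> v \<in> W"
proof -
  obtain w where w: "w \<in> W" "strongly_resolves V E w u v" using assms unfolding strong_resolving_set_def by blast
  have wV: "w \<in> V" using w assms(1) unfolding strong_resolving_set_def by blast
  from w(2) have "w = u \<or> w = v" unfolding strongly_resolves_def
    using MD_end[OF assms(2,3) wV assms(5)] MD_end[OF assms(3,2) wV assms(6)] by blast
  then show ?thesis using w by blast
qed

lemma resolve_via: assumes "x \<in> V" "u \<in> V" "v \<in> V" "D v x = D v u + D u x"
  shows "\<exists>xs. shortest_path V E v x xs \<and> u \<in> set xs"
proof -
  obtain ys where ys: "walk_of_len V E v u (D v u) ys" using walk_exists assms by blast
  obtain zs where zs: "walk_of_len V E u x (D u x) zs" using walk_exists assms by blast
  have "ys \<noteq> []" "zs \<noteq> []" using ys zs unfolding walk_of_len_def is_walk_def by auto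
  moreover have "last (ys @ tl zs) = last zs" using ys zs \<open>zs \<noteq> []\<close> unfolding walk_of_len_def
    by (cases zs; cases "tl zs") auto
  ultimately have "walk_of_len V E v x (D v x) (ys @ tl zs)"
    using ys zs is_walk_append[of E ys zs] assms(4) unfolding walk_of_len_def
    by (auto dest: list.set_sel(2))
  moreover have "u \<in> set (ys @ tl zs)" using ys \<open>ys \<noteq> []\<close> unfolding walk_of_len_def by auto
  ultimately show ?thesis unfolding shortest_path_def using gdist_eq assms by auto
qed

lemma cover_srs: assumes WV: "W \<subseteq> V"
  and cov: "\<And>u v. u \<in> V \<Longrightarrow> v \<in> V \<Longrightarrow> u \<noteq> v \<Longrightarrow> MD u v \<Longrightarrow> MD v u \<Longrightarrow> u \<in> W \<or> v \<in> W"
  shows "strong_resolving_set V E W"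
  unfolding strong_resolving_set_def
proof (intro conjI ballI impI)
  show "W \<subseteq> V" by fact
  fix u v assume uv: "u \<in> V" "v \<in> V" "u \<noteq> v"
  define S where "S = {(x, y). x \<in> V \<and> y \<in> V \<and> D x y = D x u + D u v + D v y}"
  have "(u, v) \<in> S" using uv by (simp add: S_def D_self)
  moreover have finS: "finite S" using finV unfolding S_def by (rule_tac finite_subset[of _ "V \<times> V"]) auto
  define f where "f = (\<lambda>(a, b). D a b)"
  have ne: "f ` S \<noteq> {}" using \<open>(u, v) \<in> S\<close> by blast
  obtain x y where xy: "(x, y) \<in> S" "f (x, y) = Max (f ` S)" using Max_in[OF finite_imageI[OF finS] ne] by auto
  have mx: "D a b \<le> D x y" if "(a, b) \<in> S" for a b
    using Max_ge[OF finite_imageI[OF finS], of "f (a, b)"] that xy(2) unfolding f_def by force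
  have xV: "x \<in> V" and yV: "y \<in> V" and Dxy: "D x y = D x u + D u v + D v y" using xy(1) unfolding S_def by auto
  have "MD x y" unfolding MD_def
  proof (intro allI impI, rule ccontr)
    fix z assume e: "E x z" and "\<not> D y z \<le> D y x"
    have zV: "z \<in> V" using EV e by blast
    have 1: "D y z \<le> D y x + 1" using D_step[OF yV e] .
    have 2: "D u z \<le> D u x + 1" using D_step[OF uv(1) e] .
    have 3: "D z y \<le> D z u + D u v + D v y" using D_tri[OF zV uv(1) yV] D_tri[OF uv(1) uv(2) yV] by linarith
    have "D z y = D y z" "D y x = D x y" "D z u = D u z" "D x u = D u x" using D_sym zV yV xV uv by auto
    then have "(z, y) \<in> S" "D z y > D x y" using 1 2 3 Dxy \<open>\<not> D y z \<le> D y x\<close> zV yV unfolding S_def by auto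
    then show False using mx by force
  qed
  moreover have "MD y x" unfolding MD_def
  proof (intro allI impI, rule ccontr)
    fix z assume e: "E y z" and "\<not> D x z \<le> D x y"
    have zV: "z \<in> V" using EV e by blast
    have 1: "D x z \<le> D x y + 1" using D_step[OF xV e] .
    have 2: "D v z \<le> D v y + 1" using D_step[OF uv(2) e] .
    have 3: "D x z \<le> D x u + D u v + D v z" using D_tri[OF xV uv(1) zV] D_tri[OF uv(1) uv(2) zV] by linarith
    have "(x, z) \<in> S" "D x z > D x y" using 1 2 3 Dxy \<open>\<not> D x z \<le> D x y\<close> zV xV unfolding S_def by auto
    then show False using mx by force
  qed
  moreover have "x \<noteq> y"
  proof
    assume "x = y" then have "D u v = 0" using Dxy D_self by simp
    then show False using D_pos uv by force
  qed
  ultimately have "x \<in> W \<or> y \<in> W" using cov xV yV by blast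
  then show "\<exists>w\<in>W. strongly_resolves V E w u v"
  proof
    assume xW: "x \<in> W"
    have "D x v \<le> D x u + D u v" "D x y \<le> D x v + D v y" using D_tri xV uv yV by auto
    then have "D v x = D v u + D u x" using Dxy D_sym xV uv by auto
    then show ?thesis using resolve_via[OF xV uv(1,2)] xW unfolding strongly_resolves_def by blast
  next
    assume yW: "y \<in> W"
    have "D u y \<le> D u v + D v y" "D x y \<le> D x u + D u y" using D_tri xV uv yV by auto
    then have "D u y = D u v + D v y" using Dxy by auto
    then show ?thesis using resolve_via[OF yV uv(2,1)] yW unfolding strongly_resolves_def by blast
  qed
qed

end



locale occ =
  fixes m :: nat and n :: "nat \<Rightarrow> nat"
  assumes m2: "2 \<le> m" and nodd: "\<forall>i\<in>{1..m}. odd (n i) \<and> 5 \<le> n i"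
begin

definition k :: "nat \<Rightarrow> nat" where "k i = n i div 2"
definition h :: "nat \<Rightarrow> nat" where "h i = (n i + 1) div 2 + 1"
definition proj :: "nat \<Rightarrow> nat \<times> nat \<Rightarrow> nat" where
  "proj i p = (if fst p = i then snd p else if fst p < i then 1 else h i)"
definition DD :: "nat \<times> nat \<Rightarrow> nat \<times> nat \<Rightarrow> nat" where
  "DD p q = (\<Sum>i\<in>{1..m}. cd (n i) (proj i p) (proj i q))"

abbreviation "VV \<equiv> chain_V m n"
abbreviation "EE \<equiv> chain_E m n"

lemma nk: assumes "i \<in> {1..m}" shows "n i = 2 * k i + 1 \<and> 2 \<le> k i \<and> h i = k i + 2"
proof -
  have o: "odd (n i)" "5 \<le> n i" using nodd assms by auto
  then obtain q where q: "n i = 2 * q + 1" by (auto elim!: oddE)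
  then have "k i = q" "h i = q + 2" unfolding k_def h_def by auto
  then show ?thesis using q o by auto
qed

lemma nk': "1 \<le> i \<Longrightarrow> i \<le> m \<Longrightarrow> n i = 2 * k i + 1 \<and> 2 \<le> k i \<and> h i = k i + 2"
  using nk by auto

lemma canon_val: "canon n (t, j) = (if j = 1 \<and> 2 \<le> t then (t - 1, h (t - 1)) else (t, j))"
  unfolding canon_def h_def by auto

lemma V_eq: "VV = {(i, j). 1 \<le> i \<and> i \<le> m \<and> 1 \<le> j \<and> j \<le> n i \<and> (j = 1 \<longrightarrow> i = 1)}"
proof (intro equalityI subsetI)
  fix p assume "p \<in> VV"
  then obtain t j where tj: "1 \<le> t" "t \<le> m" "1 \<le> j" "j \<le> n t" "p = canon n (t, j)"
    unfolding chain_V_def by auto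
  show "p \<in> {(i, j). 1 \<le> i \<and> i \<le> m \<and> 1 \<le> j \<and> j \<le> n i \<and> (j = 1 \<longrightarrow> i = 1)}"
  proof (cases "j = 1 \<and> 2 \<le> t")
    case True
    then have "1 \<le> t - 1" "t - 1 \<le> m" using tj by auto
    then show ?thesis using True tj nk'[of "t - 1"] by (auto simp: canon_val)
  next
    case False
    then show ?thesis using tj by (auto simp: canon_val)
  qed
next
  fix p assume p: "p \<in> {(i, j). 1 \<le> i \<and> i \<le> m \<and> 1 \<le> j \<and> j \<le> n i \<and> (j = 1 \<longrightarrow> i = 1)}"
  then have "p = canon n p" by (auto simp: canon_val split: prod.splits)
  then show "p \<in> VV" using p unfolding chain_V_def by auto
qed

lemma canon_V: "1 \<le> t \<Longrightarrow> t \<le> m \<Longrightarrow> 1 \<le> j \<Longrightarrow> j \<le> n t \<Longrightarrow> canon n (t, j) \<in> VV"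
  unfolding chain_V_def by auto

lemma canon_id: "(i, j) \<in> VV \<Longrightarrow> canon n (i, j) = (i, j)"
  by (auto simp: V_eq canon_val)

lemma proj_canon: "1 \<le> t \<Longrightarrow> t \<le> m \<Longrightarrow> 1 \<le> j \<Longrightarrow> j \<le> n t \<Longrightarrow>
   proj i (canon n (t, j)) = (if i = t then j else if i < t then h i else 1)"
  by (auto simp: canon_val proj_def)

lemma proj_range: "p \<in> VV \<Longrightarrow> i \<in> {1..m} \<Longrightarrow> 1 \<le> proj i p \<and> proj i p \<le> n i"
  using nk[of i] by (auto simp: V_eq proj_def)

lemma sc_Suc_mod: "1 \<le> j \<Longrightarrow> j \<le> N \<Longrightarrow> Suc (j mod N) = sc N j"
  using sc_mod by simp

lemma E_iff: "EE u v \<longleftrightarrow> (\<exists>t\<in>{1..m}. \<exists>j\<in>{1..n t}.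
      (u = canon n (t, j) \<and> v = canon n (t, sc (n t) j)) \<or> (v = canon n (t, j) \<and> u = canon n (t, sc (n t) j)))"
  unfolding chain_E_def
  apply (rule bex_cong[OF refl])+
  apply (simp add: sc_Suc_mod)
  done

lemma gen_edge: assumes "EE u v"
  shows "\<exists>t j j'. t \<in> {1..m} \<and> 1 \<le> j \<and> j \<le> n t \<and> 1 \<le> j' \<and> j' \<le> n t \<and> cd (n t) j j' = 1
     \<and> u = canon n (t, j) \<and> v = canon n (t, j')"
proof -
  obtain t j where tj: "t \<in> {1..m}" "j \<in> {1..n t}" and
    d: "(u = canon n (t, j) \<and> v = canon n (t, sc (n t) j)) \<or> (v = canon n (t, j) \<and> u = canon n (t, sc (n t) j))"
    using assms E_iff by blast
  have r: "1 \<le> sc (n t) j \<and> sc (n t) j \<le> n t" using sc_range tj by auto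
  have c: "cd (n t) j (sc (n t) j) = 1" using cd_sc[of "n t" j] tj nk[of t] by auto
  from d show ?thesis
  proof
    assume "u = canon n (t, j) \<and> v = canon n (t, sc (n t) j)"
    then show ?thesis using tj r c
      by (rule_tac x=t in exI, rule_tac x="j" in exI, rule_tac x="sc (n t) j" in exI) auto
  next
    assume "v = canon n (t, j) \<and> u = canon n (t, sc (n t) j)"
    then show ?thesis using tj r c cd_sym[of "n t" j "sc (n t) j"]
      by (rule_tac x=t in exI, rule_tac x="sc (n t) j" in exI, rule_tac x=j in exI) auto
  qed
qed

lemma edge_sc: "t \<in> {1..m} \<Longrightarrow> 1 \<le> j \<Longrightarrow> j \<le> n t \<Longrightarrow> EE (canon n (t, j)) (canon n (t, sc (n t) j))"
  unfolding E_iff apply (rule bexI[of _ t]) apply (rule bexI[of _ j]) by auto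

lemma edge_pc: "t \<in> {1..m} \<Longrightarrow> 1 \<le> j \<Longrightarrow> j \<le> n t \<Longrightarrow> EE (canon n (t, j)) (canon n (t, pc (n t) j))"
  unfolding E_iff apply (rule bexI[of _ t]) apply (rule bexI[of _ "pc (n t) j"]) 
  using pc_range sc_pc by auto

lemma E_sym: "EE u v \<Longrightarrow> EE v u"
  unfolding E_iff by blast

lemma E_V: "EE u v \<Longrightarrow> u \<in> VV \<and> v \<in> VV"
  unfolding E_iff using canon_V sc_range by (metis atLeastAtMost_iff)

lemma DD_step_eq: assumes "t \<in> {1..m}" "1 \<le> j" "j \<le> n t" "1 \<le> j'" "j' \<le> n t"
  shows "DD p (canon n (t, j)) + cd (n t) (proj t p) j' = DD p (canon n (t, j')) + cd (n t) (proj t p) j"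
proof -
  let ?f = "\<lambda>j i. cd (n i) (proj i p) (proj i (canon n (t, j)))"
  have eq: "?f j i = ?f j' i" if "i \<in> {1..m} - {t}" for i
    using that assms by (simp add: proj_canon)
  have "DD p (canon n (t, j)) = ?f j t + sum (?f j) ({1..m} - {t})"
    unfolding DD_def using assms(1) by (simp add: sum.remove)
  moreover have "DD p (canon n (t, j')) = ?f j' t + sum (?f j') ({1..m} - {t})"
    unfolding DD_def using assms(1) by (simp add: sum.remove)
  moreover have "sum (?f j) ({1..m} - {t}) = sum (?f j') ({1..m} - {t})"
    using eq by (rule sum.cong[OF refl])
  moreover have "?f j t = cd (n t) (proj t p) j" "?f j' t = cd (n t) (proj t p) j'"
    using assms by (auto simp: proj_canon)
  ultimately show ?thesis by simp
qed

lemma DD_self: "DD p p = 0" by (simp add: DD_def)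
lemma DD_sym: "DD p q = DD q p" unfolding DD_def by (simp add: cd_sym)
lemma DD_tri: "p \<in> VV \<Longrightarrow> q \<in> VV \<Longrightarrow> r \<in> VV \<Longrightarrow> DD p r \<le> DD p q + DD q r"
  unfolding DD_def sum.distrib[symmetric]
  by (rule sum_mono) (meson cd_tri proj_range)

lemma DD_step: assumes "p \<in> VV" "EE q r" shows "DD p r \<le> DD p q + 1"
proof -
  obtain t j j' where tj: "t \<in> {1..m}" "1 \<le> j" "j \<le> n t" "1 \<le> j'" "j' \<le> n t" "cd (n t) j j' = 1"
    "q = canon n (t, j)" "r = canon n (t, j')" using gen_edge[OF assms(2)] by blast
  have "cd (n t) (proj t p) j' \<le> cd (n t) (proj t p) j + cd (n t) j j'"
    using cd_tri proj_range[OF assms(1) tj(1)] tj by blast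
  then show ?thesis using DD_step_eq[OF tj(1-5), of p] tj by simp
qed

lemma find_t: assumes "p \<in> VV" "q \<in> VV" "p \<noteq> q"
  shows "\<exists>t j. t \<in> {1..m} \<and> 1 \<le> j \<and> j \<le> n t \<and> q = canon n (t, j) \<and> proj t p \<noteq> j"
proof -
  obtain a b' c b where pq: "p = (a, b')" "q = (c, b)" by fastforce
  have P: "1 \<le> a" "a \<le> m" "1 \<le> b'" "b' \<le> n a" "b' = 1 \<longrightarrow> a = 1" using assms pq by (auto simp: V_eq)
  have Q: "1 \<le> c" "c \<le> m" "1 \<le> b" "b \<le> n c" "b = 1 \<longrightarrow> c = 1" using assms pq by (auto simp: V_eq)
  have qc: "q = canon n (c, b)" using canon_id assms(2) pq by simp
  consider "a = c" | "a < c" | "c < a" "b \<noteq> h c" | "c < a" "b = h c" by linarith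
  then show ?thesis
  proof cases
    case 1
    then have "b' \<noteq> b" using assms pq by auto
    then show ?thesis using 1 Q qc pq by (rule_tac x=c in exI, rule_tac x=b in exI) (auto simp: proj_def)
  next
    case 2
    then show ?thesis using Q qc pq P by (rule_tac x=c in exI, rule_tac x=b in exI) (auto simp: proj_def)
  next
    case 3
    then show ?thesis using Q qc pq by (rule_tac x=c in exI, rule_tac x=b in exI) (auto simp: proj_def)
  next
    case 4
    have c1: "canon n (c + 1, 1) = q" using 4 pq Q by (simp add: canon_val)
    have "proj (c + 1) p \<noteq> 1" using 4 P Q pq nk'[of "c+1"] by (auto simp: proj_def)
    moreover have "1 \<le> n (c + 1)" using nk'[of "c+1"] 4 P by auto
    ultimately show ?thesis using c1 4 P Q by (rule_tac x="c+1" in exI, rule_tac x=1 in exI) auto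
  qed
qed

lemma DD_desc: assumes "p \<in> VV" "q \<in> VV" "p \<noteq> q" shows "\<exists>r. EE q r \<and> DD p r + 1 = DD p q"
proof -
  obtain t j where tj: "t \<in> {1..m}" "1 \<le> j" "j \<le> n t" "q = canon n (t, j)" "proj t p \<noteq> j"
    using find_t[OF assms] by blast
  let ?x = "proj t p"
  have x: "1 \<le> ?x" "?x \<le> n t" using proj_range assms(1) tj(1) by auto
  from cd_dec[OF x tj(2,3) tj(5)]
  show ?thesis
  proof
    assume a: "cd (n t) ?x (sc (n t) j) + 1 = cd (n t) ?x j"
    have "EE q (canon n (t, sc (n t) j))" using edge_sc tj by simp
    moreover have "DD p (canon n (t, sc (n t) j)) + 1 = DD p q"
      using DD_step_eq[OF tj(1-3), of "sc (n t) j" p] sc_range[OF tj(2,3)] a tj(4) by simp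
    ultimately show ?thesis by blast
  next
    assume a: "cd (n t) ?x (pc (n t) j) + 1 = cd (n t) ?x j"
    have "EE q (canon n (t, pc (n t) j))" using edge_pc tj by simp
    moreover have "DD p (canon n (t, pc (n t) j)) + 1 = DD p q"
      using DD_step_eq[OF tj(1-3), of "pc (n t) j" p] pc_range[OF tj(2,3)] a tj(4) by simp
    ultimately show ?thesis by blast
  qed
qed

lemma finV: "finite VV"
  unfolding chain_V_def by (rule finite_imageI) (rule finite_subset[of _ "{1..m} \<times> {1..Max (n ` {1..m})}"], auto,
    meson Max_ge atLeastAtMost_iff finite_atLeastAtMost finite_imageI image_eqI le_trans)

sublocale G: dgraph VV EE DD
  apply unfold_locales
  apply (rule finV)
  apply (erule E_sym)
  apply (erule E_V)
  apply (rule DD_self)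
  apply (rule DD_sym)
  apply (erule (2) DD_tri)
  apply (erule (1) DD_step)
  apply (erule (2) DD_desc)
  done

end



context occ begin

definition nc :: "nat \<Rightarrow> nat \<Rightarrow> bool" where
  "nc i b \<longleftrightarrow> i \<in> {1..m} \<and> 1 \<le> b \<and> b \<le> n i \<and> (b = 1 \<longrightarrow> i = 1) \<and> (i < m \<longrightarrow> b \<noteq> h i)"

lemma nc_V: "nc i b \<Longrightarrow> (i, b) \<in> VV"
  by (auto simp: nc_def V_eq)

lemma canon_inj_nc: assumes "nc i b" "canon n (t, j) = (i, b)" "t \<le> m" shows "t = i \<and> j = b"
proof (cases "j = 1 \<and> 2 \<le> t")
  case True
  then have c: "canon n (t, j) = (t - 1, h (t - 1))" by (simp add: canon_val)
  have e: "(i, b) = (t - 1, h (t - 1))" using assms(2) c by metis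
  have i1: "i = t - 1" using e by (metis fst_conv)
  have "b = h (t - 1)" using e by (metis snd_conv)
  then have "i = t - 1" "b = h i" using i1 by metis+
  moreover have "i < m" using True assms(3) \<open>i = t - 1\<close> by linarith
  ultimately show ?thesis using assms(1) unfolding nc_def by blast
next
  case False
  then have "(t, j) = (i, b)" using assms(2) by (simp only: canon_val if_False)
  then show ?thesis by simp
qed

lemma cd_small: "x \<le> y \<Longrightarrow> y - x \<le> K \<Longrightarrow> N = 2 * K + 1 \<Longrightarrow> cd N x y = y - x"
  by (simp add: cd_le_sub min_def)
lemma cd_small': "y \<le> x \<Longrightarrow> x - y \<le> K \<Longrightarrow> N = 2 * K + 1 \<Longrightarrow> cd N x y = x - y"
  by (simp add: cd_ge_sub min_def)

lemma MD_nc: assumes "nc i b" "v \<in> VV" "cd (n i) (proj i v) b = k i"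
  shows "G.MD (i, b) v"
  unfolding G.MD_def
proof (intro allI impI)
  fix z assume "EE (i, b) z"
  then obtain t j j' where tj: "t \<in> {1..m}" "1 \<le> j" "j \<le> n t" "1 \<le> j'" "j' \<le> n t"
    "(i, b) = canon n (t, j)" "z = canon n (t, j')" using gen_edge by blast
  have "t = i" "j = b" using canon_inj_nc[OF assms(1) tj(6)[symmetric]] tj(1) by auto
  have ib: "canon n (i, b) = (i, b)" using canon_id nc_V assms(1) by blast
  have c: "cd (n i) (proj i v) j' \<le> k i" using cd_le[of "n i"] unfolding k_def by simp
  have "DD v (canon n (i, b)) + cd (n i) (proj i v) j' = DD v (canon n (i, j')) + cd (n i) (proj i v) b"
    using DD_step_eq[OF tj(1-5), of v] \<open>t = i\<close> \<open>j = b\<close> by simp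
  then have "DD v (i, b) + cd (n i) (proj i v) j' = DD v z + k i"
    using ib tj(7) \<open>t = i\<close> assms(3) by simp
  then show "DD v z \<le> DD v (i, b)" using c by linarith
qed

lemma notMD: "EE u z \<Longrightarrow> DD v u < DD v z \<Longrightarrow> \<not> G.MD u v"
  unfolding G.MD_def using not_le by blast

lemma MMD_same: assumes "nc i x" "nc i y" "cd (n i) x y = k i"
  shows "G.MD (i, x) (i, y) \<and> G.MD (i, y) (i, x) \<and> (i, x) \<noteq> (i, y)"
proof -
  have "k i > 0" using nk assms(1) unfolding nc_def by fastforce
  then have "x \<noteq> y" using assms(3) by auto
  moreover have "proj i (i, y) = y" "proj i (i, x) = x" by (auto simp: proj_def)
  ultimately show ?thesis using MD_nc[OF assms(1) nc_V[OF assms(2)]] MD_nc[OF assms(2) nc_V[OF assms(1)]]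
      assms(3) cd_sym by metis
qed

lemma MMD_cross: assumes "1 \<le> a" "a < c" "c \<le> m"
  and x: "(a = 1 \<and> x = 1) \<or> x = 2"
  and y: "y = k c + 1 \<or> (c = m \<and> y = k c + 2)"
  shows "G.MD (a, x) (c, y) \<and> G.MD (c, y) (a, x) \<and> (a, x) \<noteq> (c, y)"
proof -
  have A: "n a = 2 * k a + 1" "2 \<le> k a" "h a = k a + 2" using nk'[of a] assms by auto
  have C: "n c = 2 * k c + 1" "2 \<le> k c" "h c = k c + 2" using nk'[of c] assms by auto
  have nca: "nc a x" using A x assms unfolding nc_def by auto
  have ncc: "nc c y" using C y assms unfolding nc_def by auto
  have "proj a (c, y) = h a" using assms by (simp add: proj_def)
  moreover have "cd (n a) (h a) x = k a" using x A by (auto simp: cd_ge_sub min_def)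
  ultimately have 1: "G.MD (a, x) (c, y)" using MD_nc[OF nca nc_V[OF ncc]] by simp
  have "proj c (a, x) = 1" using assms by (simp add: proj_def)
  moreover have "cd (n c) 1 y = k c" using y C by (auto simp: cd_le_sub min_def)
  ultimately have 2: "G.MD (c, y) (a, x)" using MD_nc[OF ncc nc_V[OF nca]] by simp
  show ?thesis using 1 2 assms by auto
qed

end



context occ begin

definition J :: "nat \<Rightarrow> nat set" where
  "J i = (if i = m then {k i + 1..n i} else if i = 1 then insert 1 {k i + 3..n i}
          else insert (k i + 1) {k i + 3..n i})"

definition W0 :: "(nat \<times> nat) set" where "W0 = Sigma {1..m} J"

lemma W0_V: "W0 \<subseteq> VV"
proof
  fix p assume "p \<in> W0"
  then obtain i j where p: "p = (i, j)" "i \<in> {1..m}" "j \<in> J i" unfolding W0_def by auto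
  have "n i = 2 * k i + 1" "2 \<le> k i" using nk p(2) by auto
  then show "p \<in> VV" using p m2 unfolding V_eq J_def by (auto split: if_splits)
qed

lemma card_J: "i \<in> {1..m} \<Longrightarrow> card (J i) = (if i = m then k i + 1 else k i)"
proof -
  assume i: "i \<in> {1..m}"
  have n: "n i = 2 * k i + 1" "2 \<le> k i" using nk i by auto
  show ?thesis
  proof (cases "i = m")
    case True then show ?thesis using n by (simp add: J_def)
  next
    case False
    have "1 \<notin> {k i + 3..n i}" "k i + 1 \<notin> {k i + 3..n i}" by auto
    show ?thesis
    proof (cases "i = 1")
      case True
      then show ?thesis using False n \<open>1 \<notin> {k i + 3..n i}\<close> by (simp add: J_def)
    next
      case F2: False
      then show ?thesis using False n \<open>k i + 1 \<notin> {k i + 3..n i}\<close> by (simp add: J_def)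
    qed
  qed
qed

lemma card_W0: "card W0 = m - 1 + n 1 div 2 + n m div 2 + (\<Sum>i = 2..m - 1. (n i - 2) div 2)"
proof -
  have "card W0 = (\<Sum>i\<in>{1..m}. card (J i))" unfolding W0_def
    by (rule card_SigmaI) (auto simp: J_def)
  also have "\<dots> = (\<Sum>i\<in>{1..m}. if i = m then k i + 1 else k i)"
    by (rule sum.cong) (auto simp: card_J)
  also have "\<dots> = k 1 + (k m + 1) + (\<Sum>i = 2..m - 1. k i)"
  proof -
    have s: "{1..m} = insert 1 (insert m {2..m - 1})" using m2 by auto
    have "(\<Sum>i = 2..m - 1. if i = m then k i + 1 else k i) = (\<Sum>i=2..m-1. k i)"
      by (rule sum.cong) auto
    then show ?thesis using m2 unfolding s by (simp add: sum.insert)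
  qed
  also have "(\<Sum>i = 2..m - 1. k i) = (\<Sum>i = 2..m - 1. (n i - 2) div 2 + 1)"
  proof (rule sum.cong)
    fix x assume "x \<in> {2..m - 1}"
    then have a: "n x = 2 * k x + 1" "2 \<le> k x" using nk by auto
    then have "n x - 2 = 2 * (k x - 1) + 1" by simp
    then show "k x = (n x - 2) div 2 + 1" using a by simp
  qed simp
  also have "\<dots> = (\<Sum>i = 2..m - 1. (n i - 2) div 2) + (m - 2)"
    by (subst sum.distrib) simp
  finally show ?thesis using m2 unfolding k_def by linarith
qed


lemma cut_notMD: assumes "1 \<le> a" "a < m" "v \<in> VV" shows "\<not> G.MD (a, h a) v"
proof -
  obtain c d where v: "v = (c, d)" by fastforce
  have A: "n a = 2 * k a + 1" "2 \<le> k a" "h a = k a + 2" using nk'[of a] assms by auto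
  have A1: "n (a+1) = 2 * k (a+1) + 1" "2 \<le> k (a+1)" using nk'[of "a+1"] assms by auto
  have aV: "(a, h a) \<in> VV" using A assms by (auto simp: V_eq)
  show ?thesis
  proof (cases "c \<le> a")
    case True
    have u1: "canon n (a+1, 1) = (a, h a)" using assms(1) by (simp add: canon_val)
    have s: "sc (n (a+1)) 1 = 2" using A1 by (simp add: sc_def)
    have e: "EE (a, h a) (canon n (a+1, 2))" using edge_sc[of "a+1" 1] u1 s assms A1 by simp
    have p: "proj (a+1) v = 1" using True v by (simp add: proj_def)
    have c1: "cd (n (a+1)) 1 2 = 1" using A1 by (simp add: cd_le_sub min_def)
    have "DD v (canon n (a+1, 1)) + cd (n (a+1)) (proj (a+1) v) 2 = DD v (canon n (a+1, 2)) + cd (n (a+1)) (proj (a+1) v) 1"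
      using DD_step_eq[of "a+1" 1 2 v] assms A1 by simp
    then have "DD v (a, h a) + 1 = DD v (canon n (a+1, 2))" using u1 p c1 by simp
    then show ?thesis using notMD[OF e] by simp
  next
    case False
    have u1: "canon n (a, h a) = (a, h a)" using canon_id aV by blast
    have s: "pc (n a) (h a) = k a + 1" using A by (simp add: pc_def)
    have e: "EE (a, h a) (canon n (a, k a + 1))" using edge_pc[of a "h a"] u1 s assms A by simp
    have p: "proj a v = h a" using False v by (simp add: proj_def)
    have c1: "cd (n a) (h a) (k a + 1) = 1" using A by (simp add: cd_ge_sub min_def)
    have "DD v (canon n (a, h a)) + cd (n a) (proj a v) (k a + 1) = DD v (canon n (a, k a + 1)) + cd (n a) (proj a v) (h a)"
      using DD_step_eq[of a "h a" "k a + 1" v] assms A by simp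
    then have "DD v (a, h a) + 1 = DD v (canon n (a, k a + 1))" using u1 p c1 by simp
    then show ?thesis using notMD[OF e] by simp
  qed
qed

lemma nW0_noncut: assumes "(i, b) \<in> VV" "(i, b) \<notin> W0" "\<not> (i < m \<and> b = h i)"
  shows "2 \<le> b \<and> b \<le> k i + 1 \<and> (2 \<le> i \<longrightarrow> b \<le> k i)"
proof -
  have i: "1 \<le> i" "i \<le> m" "1 \<le> b" "b \<le> n i" "b = 1 \<longrightarrow> i = 1" using assms(1) by (auto simp: V_eq)
  have A: "n i = 2 * k i + 1" "2 \<le> k i" "h i = k i + 2" using nk'[of i] i by auto
  have nJ: "b \<notin> J i" using assms(2) i unfolding W0_def by auto
  show ?thesis
  proof (cases "i = m")
    case True
    then show ?thesis using nJ i A m2 unfolding J_def by auto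
  next
    case False
    then show ?thesis using nJ i A assms(3) unfolding J_def by (auto split: if_splits)
  qed
qed

lemma same_notMD: assumes "i \<in> {1..m}" "2 \<le> b" "b \<le> k i + 1" "2 \<le> d" "d \<le> k i + 1" "b \<noteq> d"
  shows "\<not> G.MD (i, b) (i, d)"
proof -
  have A: "n i = 2 * k i + 1" "2 \<le> k i" "h i = k i + 2" using nk assms by auto
  have u1: "canon n (i, b) = (i, b)" using assms by (simp add: canon_val)
  have p: "proj i (i, d) = d" by (simp add: proj_def)
  show ?thesis
  proof (cases "b < d")
    case True
    have s: "pc (n i) b = b - 1" using assms by (simp add: pc_def)
    have e: "EE (i, b) (canon n (i, b - 1))" using edge_pc[of i b] u1 s assms A by simp
    have c1: "cd (n i) d (b - 1) = d - b + 1" using cd_small'[of "b - 1" d "k i" "n i"] A assms True by simp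
    have c2: "cd (n i) d b = d - b" using cd_small'[of b d "k i" "n i"] A assms True by simp
    have "DD (i, d) (canon n (i, b)) + cd (n i) (proj i (i, d)) (b - 1) = DD (i, d) (canon n (i, b - 1)) + cd (n i) (proj i (i, d)) b"
      using DD_step_eq[of i b "b - 1" "(i, d)"] assms A by simp
    then have "DD (i, d) (i, b) + 1 = DD (i, d) (canon n (i, b - 1))" using u1 p c1 c2 True by simp
    then show ?thesis using notMD[OF e] by simp
  next
    case False
    then have bd: "d < b" using assms by simp
    have s: "sc (n i) b = b + 1" using assms A by (simp add: sc_def)
    have e: "EE (i, b) (canon n (i, b + 1))" using edge_sc[of i b] u1 s assms A by simp
    have c1: "cd (n i) d (b + 1) = b + 1 - d" using cd_small[of d "b + 1" "k i" "n i"] A assms bd by simp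
    have c2: "cd (n i) d b = b - d" using cd_small[of d b "k i" "n i"] A assms bd by simp
    have "DD (i, d) (canon n (i, b)) + cd (n i) (proj i (i, d)) (b + 1) = DD (i, d) (canon n (i, b + 1)) + cd (n i) (proj i (i, d)) b"
      using DD_step_eq[of i b "b + 1" "(i, d)"] assms A by simp
    then have "DD (i, d) (i, b) + 1 = DD (i, d) (canon n (i, b + 1))" using u1 p c1 c2 bd by simp
    then show ?thesis using notMD[OF e] by simp
  qed
qed

lemma cross_notMD: assumes "a < c" "c \<le> m" "2 \<le> d" "d \<le> k c"
  shows "\<not> G.MD (c, d) (a, x)"
proof -
  have c1': "1 \<le> c" using assms by simp
  have A: "n c = 2 * k c + 1" "2 \<le> k c" "h c = k c + 2" using nk'[of c] assms by auto
  have u1: "canon n (c, d) = (c, d)" using assms by (simp add: canon_val)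
  have p: "proj c (a, x) = 1" using assms by (simp add: proj_def)
  have s: "sc (n c) d = d + 1" using assms A by (simp add: sc_def)
  have e: "EE (c, d) (canon n (c, d + 1))" using edge_sc[of c d] u1 s assms A by simp
  have c1: "cd (n c) 1 (d + 1) = d" using cd_small[of 1 "d + 1" "k c" "n c"] A assms by simp
  have c2: "cd (n c) 1 d = d - 1" using cd_small[of 1 d "k c" "n c"] A assms by simp
  have "DD (a, x) (canon n (c, d)) + cd (n c) (proj c (a, x)) (d + 1) = DD (a, x) (canon n (c, d + 1)) + cd (n c) (proj c (a, x)) d"
    using DD_step_eq[of c d "d + 1" "(a, x)"] assms A by simp
  then have "DD (a, x) (c, d) + 1 = DD (a, x) (canon n (c, d + 1))" using u1 p c1 c2 assms by simp
  then show ?thesis using notMD[OF e] by simp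
qed

lemma cover_W0: assumes "u \<in> VV" "v \<in> VV" "u \<noteq> v" "G.MD u v" "G.MD v u"
  shows "u \<in> W0 \<or> v \<in> W0"
proof (rule ccontr)
  assume nW: "\<not> (u \<in> W0 \<or> v \<in> W0)"
  obtain a b c d where uv: "u = (a, b)" "v = (c, d)" by fastforce
  have ab: "1 \<le> a" "a \<le> m" and cd': "1 \<le> c" "c \<le> m" using assms uv by (auto simp: V_eq)
  have nu: "\<not> (a < m \<and> b = h a)" using cut_notMD[of a v] assms uv ab by auto
  have nv: "\<not> (c < m \<and> d = h c)" using cut_notMD[of c u] assms uv cd' by auto
  have B: "2 \<le> b \<and> b \<le> k a + 1 \<and> (2 \<le> a \<longrightarrow> b \<le> k a)" using nW0_noncut[of a b] nW assms nu uv by auto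
  have Dd: "2 \<le> d \<and> d \<le> k c + 1 \<and> (2 \<le> c \<longrightarrow> d \<le> k c)" using nW0_noncut[of c d] nW assms nv uv by auto
  consider "a = c" | "a < c" | "c < a" by linarith
  then show False
  proof cases
    case 1
    then show False using same_notMD[of a b d] B Dd ab assms uv by auto
  next
    case 2
    then show False using cross_notMD[of a c d b] Dd ab cd' assms uv by auto
  next
    case 3
    then show False using cross_notMD[of c a b d] B ab cd' assms uv by auto
  qed
qed

end



lemma path_cover:
  fixes s :: "nat \<Rightarrow> 'b"
  assumes "inj_on s {a..a+d}" "\<forall>t. a \<le> t \<and> t < a + d \<longrightarrow> s t \<in> A \<or> s (Suc t) \<in> A"
  shows "(d + 1 + (if s a \<in> A then 1 else 0) + (if s (a+d) \<in> A then 1 else 0)) div 2 \<le> card (A \<inter> s ` {a..a+d})"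
  using assms
proof (induction d)
  case 0
  have "A \<inter> s ` {a..a} = (if s a \<in> A then {s a} else {})" by auto
  then show ?case by simp
next
  case (Suc d)
  have inj: "inj_on s {a..a+d}" using Suc.prems(1) by (rule inj_on_subset) auto
  have IH: "(d + 1 + (if s a \<in> A then 1 else 0) + (if s (a+d) \<in> A then 1 else 0)) div 2 \<le> card (A \<inter> s ` {a..a+d})"
    using Suc.IH[OF inj] Suc.prems(2) by auto
  have iv: "{a..a + Suc d} = insert (a + Suc d) {a..a+d}" by auto
  have ns: "s (a + Suc d) \<notin> s ` {a..a+d}"
  proof
    assume "s (a + Suc d) \<in> s ` {a..a+d}"
    then obtain t where t: "t \<in> {a..a+d}" "s (a + Suc d) = s t" by auto
    then have "a + Suc d = t" using inj_onD[OF Suc.prems(1)] by auto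
    then show False using t by auto
  qed
  have fin: "finite (A \<inter> s ` {a..a+d})" by simp
  have cardeq: "card (A \<inter> s ` {a..a + Suc d}) = card (A \<inter> s ` {a..a+d}) + (if s (a + Suc d) \<in> A then 1 else 0)"
  proof (cases "s (a + Suc d) \<in> A")
    case True
    then have "A \<inter> s ` {a..a + Suc d} = insert (s (a + Suc d)) (A \<inter> s ` {a..a+d})" unfolding iv by auto
    then show ?thesis using True ns fin by simp
  next
    case False
    then have "A \<inter> s ` {a..a + Suc d} = A \<inter> s ` {a..a+d}" unfolding iv by auto
    then show ?thesis using False by simp
  qed
  have cov: "s (a + d) \<in> A \<or> s (a + Suc d) \<in> A" using Suc.prems(2) by auto
  show ?case
  proof (cases "s (a + Suc d) \<in> A")
    case True
    then show ?thesis using IH cardeq by (simp split: if_splits; linarith)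
  next
    case False
    then have "s (a + d) \<in> A" using cov by simp
    then show ?thesis using IH cardeq False by simp
  qed
qed

definition sqK :: "nat \<Rightarrow> nat \<Rightarrow> nat" where
  "sqK K t = (if t = 2 * K + 1 then 1 else if even t then t div 2 + 1 else t div 2 + K + 2)"

lemma sqK_range: "t \<le> 2 * K + 1 \<Longrightarrow> 1 \<le> sqK K t \<and> sqK K t \<le> 2 * K + 1"
  unfolding sqK_def by (auto elim!: evenE oddE)

lemma sqK_vals: "1 \<le> K \<Longrightarrow> sqK K 1 = K + 2" "sqK K 2 = 2" "sqK K (2 * K) = K + 1" "sqK K (2 * K + 1) = 1"
  unfolding sqK_def by auto

lemma sqK_not1: "1 \<le> t \<Longrightarrow> t \<le> 2 * K \<Longrightarrow> sqK K t \<noteq> 1"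
  unfolding sqK_def by (auto elim!: evenE oddE)

lemma sqK_notK2: "2 \<le> t \<Longrightarrow> t \<le> 2 * K + 1 \<Longrightarrow> sqK K t \<noteq> K + 2"
  unfolding sqK_def by (auto elim!: evenE oddE)

lemma sqK_cd: assumes "t < 2 * K + 1" shows "cd (2 * K + 1) (sqK K t) (sqK K (Suc t)) = K"
proof (cases "even t")
  case True
  then obtain r where r: "t = 2 * r" by (auto elim: evenE)
  show ?thesis
  proof (cases "t = 2 * K")
    case True
    then show ?thesis unfolding sqK_def by (simp add: cd_ge_sub min_def)
  next
    case False
    then have "Suc t \<noteq> 2 * K + 1" "odd (Suc t)" "t \<noteq> 2 * K + 1" using r by auto
    then have "sqK K t = r + 1" "sqK K (Suc t) = r + K + 2" using r unfolding sqK_def by auto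
    then show ?thesis by (simp add: cd_le_sub min_def)
  qed
next
  case False
  then obtain r where r: "t = 2 * r + 1" by (auto elim: oddE)
  then have "Suc t \<noteq> 2 * K + 1" "t \<noteq> 2 * K + 1" using assms by auto
  then have "sqK K t = r + K + 2" "sqK K (Suc t) = r + 2" using r unfolding sqK_def by auto
  then show ?thesis by (simp add: cd_ge_sub min_def)
qed

lemma sqK_inj: "inj_on (sqK K) {1..2 * K + 1}"
proof
  fix x y assume x: "x \<in> {1..2 * K + 1}" and y: "y \<in> {1..2 * K + 1}" and e: "sqK K x = sqK K y"
  have cx: "(x = 2*K+1 \<and> sqK K x = 1) \<or> (x \<noteq> 2*K+1 \<and> even x \<and> 2 * (sqK K x - 1) = x \<and> 2 \<le> sqK K x \<and> sqK K x \<le> K + 1)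
     \<or> (x \<noteq> 2*K+1 \<and> odd x \<and> 2 * (sqK K x - K - 2) + 1 = x \<and> K + 2 \<le> sqK K x)" if "x \<in> {1..2 * K + 1}" for x
  proof (cases "x = 2*K+1")
    case True then show ?thesis by (simp add: sqK_def)
  next
    case False
    show ?thesis
    proof (cases "even x")
      case True
      then obtain r where "x = 2 * r" by (auto elim: evenE)
      then show ?thesis using False True that by (simp add: sqK_def)
    next
      case F2: False
      then obtain r where "x = 2 * r + 1" by (auto elim: oddE)
      then show ?thesis using False F2 that by (simp add: sqK_def)
    qed
  qed
  from cx[OF x] cx[OF y] e show "x = y" by auto
qed


context occ begin

definition lo :: "nat \<Rightarrow> nat" where "lo i = (if i = m then 1 else 2)"
definition hi :: "nat \<Rightarrow> nat" where "hi i = (if i = 1 then 2 * k i + 1 else 2 * k i)"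

lemma nc_sq: assumes "i \<in> {1..m}" "lo i \<le> t" "t \<le> hi i" shows "nc i (sqK (k i) t)"
proof -
  have A: "n i = 2 * k i + 1" "2 \<le> k i" "h i = k i + 2" using nk assms by auto
  have t: "1 \<le> t" "t \<le> 2 * k i + 1" using assms unfolding lo_def hi_def by (auto split: if_splits)
  have r: "1 \<le> sqK (k i) t \<and> sqK (k i) t \<le> n i" using sqK_range[OF t(2)] A by simp
  have 1: "sqK (k i) t = 1 \<longrightarrow> i = 1"
  proof
    assume "sqK (k i) t = 1"
    then have "\<not> t \<le> 2 * k i" using sqK_not1[OF t(1)] by blast
    then show "i = 1" using assms(3) unfolding hi_def by (auto split: if_splits)
  qed
  have 2: "i < m \<longrightarrow> sqK (k i) t \<noteq> h i"
  proof
    assume "i < m"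
    then have "2 \<le> t" using assms(2) unfolding lo_def by simp
    then show "sqK (k i) t \<noteq> h i" using sqK_notK2[OF _ t(2)] A by simp
  qed
  show ?thesis unfolding nc_def using assms(1) r 1 2 by auto
qed

lemma cov_path: assumes "strong_resolving_set VV EE W" "i \<in> {1..m}" "lo i \<le> t" "t < hi i"
  shows "(i, sqK (k i) t) \<in> W \<or> (i, sqK (k i) (Suc t)) \<in> W"
proof -
  have A: "n i = 2 * k i + 1" "2 \<le> k i" "h i = k i + 2" using nk assms by auto
  have n1: "nc i (sqK (k i) t)" using nc_sq assms by simp
  have n2: "nc i (sqK (k i) (Suc t))" using nc_sq assms by simp
  have "t < 2 * k i + 1" using assms(4) unfolding hi_def by (auto split: if_splits)
  then have "cd (n i) (sqK (k i) t) (sqK (k i) (Suc t)) = k i" using sqK_cd A by simp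
  from MMD_same[OF n1 n2 this] show ?thesis
    using G.srs_MMD[OF assms(1) nc_V[OF n1] nc_V[OF n2]] by blast
qed

lemma cyc_card: assumes "strong_resolving_set VV EE W" "i \<in> {1..m}"
  shows "(hi i - lo i + 1 + (if (i, sqK (k i) (lo i)) \<in> W then 1 else 0) + (if (i, sqK (k i) (hi i)) \<in> W then 1 else 0)) div 2
     \<le> card ({j. (i, j) \<in> W} \<inter> sqK (k i) ` {lo i..hi i})"
proof -
  have A: "n i = 2 * k i + 1" "2 \<le> k i" using nk assms by auto
  have lh: "lo i \<le> hi i" "lo i + (hi i - lo i) = hi i" using A unfolding lo_def hi_def by auto
  have "{lo i..hi i} \<subseteq> {1..2 * k i + 1}" unfolding lo_def hi_def by auto
  then have inj: "inj_on (sqK (k i)) {lo i..lo i + (hi i - lo i)}" using sqK_inj lh(2) by (metis inj_on_subset)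
  have cov: "\<forall>t. lo i \<le> t \<and> t < lo i + (hi i - lo i) \<longrightarrow> sqK (k i) t \<in> {j. (i, j) \<in> W} \<or> sqK (k i) (Suc t) \<in> {j. (i, j) \<in> W}"
    using cov_path[OF assms] lh by auto
  show ?thesis using path_cover[OF inj cov] lh(2) by simp
qed

definition Lf :: "(nat \<times> nat) set \<Rightarrow> nat \<Rightarrow> bool" where
  "Lf W i = (if i = 1 then (1, 1) \<in> W \<and> (1, 2) \<in> W else (i, 2) \<in> W)"
definition Rf :: "(nat \<times> nat) set \<Rightarrow> nat \<Rightarrow> bool" where
  "Rf W i = (if i = m then (m, k m + 1) \<in> W \<and> (m, k m + 2) \<in> W else (i, k i + 1) \<in> W)"
definition fl :: "(nat \<times> nat) set \<Rightarrow> nat \<Rightarrow> bool" where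
  "fl W i = (if i = 1 then Lf W 1 else if i = m then Rf W m else Lf W i \<or> Rf W i)"
definition base :: "nat \<Rightarrow> nat" where
  "base i = (if i = 1 \<or> i = m then k i else k i - 1)"

lemma cyc_lb: assumes "strong_resolving_set VV EE W" "i \<in> {1..m}"
  shows "base i + (if fl W i then 1 else 0) \<le> card ({j. (i, j) \<in> W} \<inter> sqK (k i) ` {lo i..hi i})"
proof -
  have A: "n i = 2 * k i + 1" "2 \<le> k i" using nk assms by auto
  note c = cyc_card[OF assms]
  consider "i = 1" | "i = m" | "i \<noteq> 1" "i \<noteq> m" by blast
  then show ?thesis
  proof cases
    case 1
    then have "i \<noteq> m" using m2 by simp
    then have "lo i = 2" "hi i = 2 * k i + 1" "sqK (k i) (lo i) = 2" "sqK (k i) (hi i) = 1"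
      using 1 A sqK_vals[of "k i"] unfolding lo_def hi_def by auto
    then show ?thesis using c 1 A unfolding fl_def Lf_def base_def by (auto split: if_splits)
  next
    case 2
    then have "i \<noteq> 1" using m2 by simp
    then have "lo i = 1" "hi i = 2 * k i" "sqK (k i) (lo i) = k i + 2" "sqK (k i) (hi i) = k i + 1"
      using 2 A sqK_vals[of "k i"] unfolding lo_def hi_def by auto
    then show ?thesis using c 2 A \<open>i \<noteq> 1\<close> unfolding fl_def Rf_def base_def by (auto split: if_splits)
  next
    case 3
    then have "lo i = 2" "hi i = 2 * k i" "sqK (k i) (lo i) = 2" "sqK (k i) (hi i) = k i + 1"
      using 3 A sqK_vals[of "k i"] unfolding lo_def hi_def by auto
    then show ?thesis using c 3 A unfolding fl_def Rf_def Lf_def base_def by (auto split: if_splits)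
  qed
qed


lemma cross_flag: assumes "strong_resolving_set VV EE W" "1 \<le> a" "a < c" "c \<le> m"
  shows "Lf W a \<or> Rf W c"
proof (rule ccontr)
  assume nf: "\<not> (Lf W a \<or> Rf W c)"
  obtain x where x: "(a = 1 \<and> x = 1) \<or> x = 2" "(a, x) \<notin> W"
    using nf unfolding Lf_def by (cases "a = 1") auto
  obtain y where y: "y = k c + 1 \<or> (c = m \<and> y = k c + 2)" "(c, y) \<notin> W"
    using nf unfolding Rf_def by (cases "c = m") auto
  have A: "n a = 2 * k a + 1" "2 \<le> k a" using nk'[of a] assms by auto
  have C: "n c = 2 * k c + 1" "2 \<le> k c" using nk'[of c] assms by auto
  have xV: "(a, x) \<in> VV" using x(1) A assms unfolding V_eq by auto
  have yV: "(c, y) \<in> VV" using y(1) C assms unfolding V_eq by auto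
  from MMD_cross[OF assms(2-4) x(1) y(1)] have "(a, x) \<in> W \<or> (c, y) \<in> W"
    using G.srs_MMD[OF assms(1) xV yV] by blast
  then show False using x y by blast
qed

lemma count_fl: assumes "strong_resolving_set VV EE W"
  shows "m - 1 \<le> card {i \<in> {1..m}. fl W i}"
proof -
  let ?S = "{i \<in> {1..m}. \<not> fl W i}"
  have one: "i = j" if "i \<in> ?S" "j \<in> ?S" "i < j" for i j
  proof -
    have "\<not> Lf W i" using that m2 unfolding fl_def by (auto split: if_splits)
    moreover have "\<not> Rf W j" using that m2 unfolding fl_def by (auto split: if_splits)
    ultimately show ?thesis using cross_flag[OF assms, of i j] that by auto
  qed
  have "\<forall>i\<in>?S. \<forall>j\<in>?S. i = j"
  proof (intro ballI)
    fix i j assume "i \<in> ?S" "j \<in> ?S"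
    then show "i = j" using one[of i j] one[of j i] by (cases "i < j"; cases "j < i") auto
  qed
  then have cS: "card ?S \<le> 1" using card_le_Suc0_iff_eq[of ?S] by auto
  have "{1..m} = {i \<in> {1..m}. fl W i} \<union> ?S" by auto
  then have "card {1..m} = card {i \<in> {1..m}. fl W i} + card ?S"
    by (metis (no_types, lifting) card_Un_disjoint disjoint_iff finite_Un finite_atLeastAtMost mem_Collect_eq)
  then show ?thesis using cS by simp
qed

lemma base_sum: "(\<Sum>i\<in>{1..m}. base i) + (m - 1) = m - 1 + n 1 div 2 + n m div 2 + (\<Sum>i = 2..m - 1. (n i - 2) div 2)"
proof -
  have s: "{1..m} = insert 1 (insert m {2..m - 1})" using m2 by auto
  have "(\<Sum>i\<in>{1..m}. base i) = k 1 + k m + (\<Sum>i = 2..m - 1. base i)"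
    using m2 unfolding s by (simp add: sum.insert base_def)
  also have "(\<Sum>i = 2..m - 1. base i) = (\<Sum>i = 2..m - 1. (n i - 2) div 2)"
  proof (rule sum.cong)
    fix x assume x: "x \<in> {2..m - 1}"
    then have a: "n x = 2 * k x + 1" "2 \<le> k x" using nk by auto
    then have "n x - 2 = 2 * (k x - 1) + 1" by simp
    then show "base x = (n x - 2) div 2" using a x unfolding base_def by auto
  qed simp
  finally show ?thesis unfolding k_def by simp
qed

lemma lower: assumes "finite W" "strong_resolving_set VV EE W"
  shows "m - 1 + n 1 div 2 + n m div 2 + (\<Sum>i = 2..m - 1. (n i - 2) div 2) \<le> card W"
proof -
  define P where "P i = {j. (i, j) \<in> W} \<inter> sqK (k i) ` {lo i..hi i}" for i
  define B where "B i = Pair i ` P i" for i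
  have finB: "\<forall>i\<in>{1..m}. finite (B i)" unfolding B_def P_def by auto
  have disj: "\<forall>i\<in>{1..m}. \<forall>j\<in>{1..m}. i \<noteq> j \<longrightarrow> B i \<inter> B j = {}" unfolding B_def by auto
  have "card (\<Union>(B ` {1..m})) = (\<Sum>i\<in>{1..m}. card (B i))"
    using card_UN_disjoint[OF _ finB disj] by simp
  also have "\<dots> = (\<Sum>i\<in>{1..m}. card (P i))"
    unfolding B_def by (rule sum.cong) (auto intro: card_image inj_onI)
  finally have e1: "card (\<Union>(B ` {1..m})) = (\<Sum>i\<in>{1..m}. card (P i))" .
  have "\<Union>(B ` {1..m}) \<subseteq> W" unfolding B_def P_def by auto
  then have e2: "card (\<Union>(B ` {1..m})) \<le> card W" using assms(1) by (rule card_mono[rotated])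
  have e3: "(\<Sum>i\<in>{1..m}. base i + (if fl W i then 1 else 0)) \<le> (\<Sum>i\<in>{1..m}. card (P i))"
    unfolding P_def by (rule sum_mono) (rule cyc_lb[OF assms(2)])
  have "(\<Sum>i\<in>{1..m}. (if fl W i then 1 else 0)) = card {i \<in> {1..m}. fl W i}"
    by (simp add: sum.inter_filter[symmetric])
  then have e4: "(\<Sum>i\<in>{1..m}. base i + (if fl W i then 1 else 0)) = (\<Sum>i\<in>{1..m}. base i) + card {i \<in> {1..m}. fl W i}"
    by (simp add: sum.distrib)
  show ?thesis using e1 e2 e3 e4 count_fl[OF assms(2)] base_sum by linarith
qed

lemma sdim_eq: "sdim VV EE = m - 1 + n 1 div 2 + n m div 2 + (\<Sum>i = 2..m - 1. (n i - 2) div 2)"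
  unfolding sdim_def
proof (rule Least_equality)
  have "finite W0" using W0_V finV finite_subset by blast
  moreover have "strong_resolving_set VV EE W0" using G.cover_srs[OF W0_V] cover_W0 by blast
  ultimately show "\<exists>W. finite W \<and> strong_resolving_set VV EE W \<and>
        card W = m - 1 + n 1 div 2 + n m div 2 + (\<Sum>i = 2..m - 1. (n i - 2) div 2)"
    using card_W0 by blast
next
  fix y assume "\<exists>W. finite W \<and> strong_resolving_set VV EE W \<and> card W = y"
  then show "m - 1 + n 1 div 2 + n m div 2 + (\<Sum>i = 2..m - 1. (n i - 2) div 2) \<le> y" using lower by blast
qed

end

theorem theorem3p8:
  fixes m :: nat and n :: "nat \<Rightarrow> nat"
  assumes "m \<ge> 2"
    and "\<forall>i\<in>{1..m}. odd (n i) \<and> n i \<ge> 5"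
  shows "sdim (chain_V m n) (chain_E m n) =
           m - 1 + n 1 div 2 + n m div 2 + (\<Sum>i = 2..m - 1. (n i - 2) div 2)"
proof -
  interpret occ m n using assms by unfold_locales auto
  show ?thesis by (rule sdim_eq)
qed


end
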